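(* The critical push-pull ring with an even number $M$ of servers (i.e. with $\lambda_i=\mu_i$ for all $i=1,\dots,M$) is non-stabilizable: there is no deterministic stationary non-idling policy under which the associated Markov jump process has a positive recurrent class that is entered with probability 1.
   Context: A push-pull ring has $M\ge2$ servers and $M$ job streams, with strictly positive rates $\lambda_i,\mu_i$, $i=1,\dots,M$; all index arithmetic is modulo $M$ on $\{1,\dots,M\}$. The state is $(x_1,\dots,x_M)\in\mathbb{Z}_+^M$, $x_i$ being the number of jobs in queue $i$ (stream $i$). Server $i$ can either "push" on stream $i$ (an operation completing at exponential rate $\lambda_i$ and adding one job to queue $i$; always allowed) or "pull" from queue $i-1$ (completing at exponential rate $\mu_{i-1}$ and removing one job from queue $i-1$; allowed only if $x_{i-1}>0$). Durations are exponential, preemption is allowed. A non-idling (deterministic stationary) policy is a map $\mathcal{P}:\mathbb{Z}_+^M\to\{\text{push},\text{pull}\}^M$ respecting these restrictions. Given $\mathcal{P}$, all $M$ chosen operations run simultaneously at their exponential rates and the state jumps according to whichever completes first, giving a Markov jump process. The network is stabilizable if some non-idling policy makes this process have a positive recurrent class entered with probability 1, and non-stabilizable otherwise. *)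

theory Defs
  imports "HOL-Analysis.Analysis"
begin

text \<open>A Markov jump process on a countable set of states is described by its
embedded jump chain kernel K (K x y = probability that the jump from x goes to y)
and by its total jump rate q x > 0 (holding time in x is exponential with rate q x).\<close>

text \<open>taboo K A x n y = P_x(X_n = y and X_k not in A for all 1 <= k <= n),
where X is the embedded jump chain started at x.\<close>
fun taboo :: "('a \<Rightarrow> 'a \<Rightarrow> ennreal) \<Rightarrow> 'a set \<Rightarrow> 'a \<Rightarrow> nat \<Rightarrow> 'a \<Rightarrow> ennreal" where
  "taboo K A x 0 y = (if y = x then 1 else 0)"
| "taboo K A x (Suc n) y = (if y \<in> A then 0 else (\<Sum>\<^sub>\<infinity> z. taboo K A x n z * K z y))"

definition reaches :: "('a \<Rightarrow> 'a \<Rightarrow> ennreal) \<Rightarrow> 'a \<Rightarrow> 'a \<Rightarrow> bool" where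
  "reaches K x y \<longleftrightarrow> (\<exists>n. taboo K {} x n y \<noteq> 0)"

definition return_prob :: "('a \<Rightarrow> 'a \<Rightarrow> ennreal) \<Rightarrow> 'a \<Rightarrow> ennreal" where
  "return_prob K s = (\<Sum>\<^sub>\<infinity> n. \<Sum>\<^sub>\<infinity> z. taboo K {s} s n z * K z s)"

text \<open>Expected (continuous) time until the first return to s, started at s:
sum over the jumps n before the return of the mean holding time 1/q(X_n).\<close>
definition mean_return_time :: "('a \<Rightarrow> 'a \<Rightarrow> ennreal) \<Rightarrow> ('a \<Rightarrow> real) \<Rightarrow> 'a \<Rightarrow> ennreal" where
  "mean_return_time K q s = (\<Sum>\<^sub>\<infinity> n. \<Sum>\<^sub>\<infinity> z. taboo K {s} s n z / ennreal (q z))"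

definition positive_recurrent :: "('a \<Rightarrow> 'a \<Rightarrow> ennreal) \<Rightarrow> ('a \<Rightarrow> real) \<Rightarrow> 'a \<Rightarrow> bool" where
  "positive_recurrent K q s \<longleftrightarrow> return_prob K s = 1 \<and> mean_return_time K q s < \<infinity>"

definition pos_rec_class :: "('a \<Rightarrow> 'a \<Rightarrow> ennreal) \<Rightarrow> ('a \<Rightarrow> real) \<Rightarrow> 'a set \<Rightarrow> 'a set \<Rightarrow> bool" where
  "pos_rec_class K q S C \<longleftrightarrow>
     (\<exists>s\<in>S. positive_recurrent K q s \<and> C = {y \<in> S. reaches K s y \<and> reaches K y s})"

definition hit_prob :: "('a \<Rightarrow> 'a \<Rightarrow> ennreal) \<Rightarrow> 'a set \<Rightarrow> 'a \<Rightarrow> ennreal" where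
  "hit_prob K C x = (if x \<in> C then 1 else
      (\<Sum>\<^sub>\<infinity> n. \<Sum>\<^sub>\<infinity> z. taboo K C x n z * (\<Sum>\<^sub>\<infinity> y\<in>C. K z y)))"

definition stable_process :: "('a \<Rightarrow> 'a \<Rightarrow> ennreal) \<Rightarrow> ('a \<Rightarrow> real) \<Rightarrow> 'a set \<Rightarrow> bool" where
  "stable_process K q S \<longleftrightarrow>
     (\<exists>C. pos_rec_class K q S C \<and> (\<forall>x\<in>S. hit_prob K C x = 1))"

text \<open>Servers/streams are indexed 0..M-1 (paper: 1..M); index arithmetic mod M.
States: functions nat => nat vanishing from index M on.\<close>
definition pp_states :: "nat \<Rightarrow> (nat \<Rightarrow> nat) set" where
  "pp_states M = {x. \<forall>i\<ge>M. x i = 0}"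

definition prev :: "nat \<Rightarrow> nat \<Rightarrow> nat" where
  "prev M i = (i + M - 1) mod M"

text \<open>A deterministic stationary policy: P x i = True means server i pulls from
queue i-1 in state x, False means it pushes on stream i.\<close>
type_synonym policy = "(nat \<Rightarrow> nat) \<Rightarrow> nat \<Rightarrow> bool"

definition non_idling :: "nat \<Rightarrow> policy \<Rightarrow> bool" where
  "non_idling M P \<longleftrightarrow> (\<forall>x\<in>pp_states M. \<forall>i<M. P x i \<longrightarrow> x (prev M i) > 0)"

definition op_target :: "nat \<Rightarrow> policy \<Rightarrow> (nat \<Rightarrow> nat) \<Rightarrow> nat \<Rightarrow> (nat \<Rightarrow> nat)" where
  "op_target M P x i =
     (if P x i then x(prev M i := x (prev M i) - 1) else x(i := Suc (x i)))"

definition op_rate :: "nat \<Rightarrow> (nat \<Rightarrow> real) \<Rightarrow> (nat \<Rightarrow> real) \<Rightarrow> policy \<Rightarrow> (nat \<Rightarrow> nat) \<Rightarrow> nat \<Rightarrow> real" where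
  "op_rate M lam mu P x i = (if P x i then mu (prev M i) else lam i)"

definition pp_qtot :: "nat \<Rightarrow> (nat \<Rightarrow> real) \<Rightarrow> (nat \<Rightarrow> real) \<Rightarrow> policy \<Rightarrow> (nat \<Rightarrow> nat) \<Rightarrow> real" where
  "pp_qtot M lam mu P x = (\<Sum>i<M. op_rate M lam mu P x i)"

text \<open>Embedded jump chain: whichever of the M running exponential operations completes first.\<close>
definition pp_kernel :: "nat \<Rightarrow> (nat \<Rightarrow> real) \<Rightarrow> (nat \<Rightarrow> real) \<Rightarrow> policy \<Rightarrow> (nat \<Rightarrow> nat) \<Rightarrow> (nat \<Rightarrow> nat) \<Rightarrow> ennreal" where
  "pp_kernel M lam mu P x y =
     ennreal ((\<Sum>i<M. if op_target M P x i = y then op_rate M lam mu P x i else 0) / pp_qtot M lam mu P x)"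

definition stabilizable :: "nat \<Rightarrow> (nat \<Rightarrow> real) \<Rightarrow> (nat \<Rightarrow> real) \<Rightarrow> bool" where
  "stabilizable M lam mu \<longleftrightarrow>
     (\<exists>P. non_idling M P \<and> stable_process (pp_kernel M lam mu P) (pp_qtot M lam mu P) (pp_states M))"

end

theory Submission
  imports Defs
begin


instance ennreal :: t3_space
proof
  fix S :: "ennreal set" and y assume cS: "closed S" and yS: "y \<notin> S"
  have o: "open (-S)" using cS by (simp add: open_Compl)
  have yo: "y \<in> -S" using yS by simp
  obtain a where a: "y \<noteq> 0 \<Longrightarrow> a < y \<and> {a<..y} \<subseteq> -S"
  proof (cases "y = 0")
    case True then show ?thesis using that by auto
  next
    case False then have "0 < y" by (simp add: zero_less_iff_neq_zero)
    from open_left[OF o yo this] obtain b where "b < y" "{b<..y} \<subseteq> -S" by blast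
    then show ?thesis using that by blast
  qed
  obtain b where b: "y \<noteq> top \<Longrightarrow> y < b \<and> {y..<b} \<subseteq> -S"
  proof (cases "y = top")
    case True then show ?thesis using that by auto
  next
    case False then have "y < top" by (simp add: top.not_eq_extremum)
    from open_right[OF o yo this] obtain b where "y < b" "{y..<b} \<subseteq> -S" by blast
    then show ?thesis using that by blast
  qed
  obtain c where c: "y \<noteq> 0 \<Longrightarrow> a < c \<and> c < y"
  proof (cases "y = 0")
    case False then obtain c where "a < c" "c < y" using a dense by blast
    then show ?thesis using that by blast
  qed (use that in auto)
  obtain d where d: "y \<noteq> top \<Longrightarrow> y < d \<and> d < b"
  proof (cases "y = top")
    case False then obtain c where "y < c" "c < b" using b dense by blast
    then show ?thesis using that by blast
  qed (use that in auto)
  define U where "U = (if y = 0 then UNIV else {c<..}) \<inter> (if y = top then UNIV else {..<d})"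
  define V where "V = (if y = 0 then {} else {..<c}) \<union> (if y = top then {} else {d<..})"
  have "open U" unfolding U_def by auto
  moreover have "open V" unfolding V_def by auto
  moreover have "y \<in> U" unfolding U_def using c d by auto
  moreover have "S \<subseteq> V"
  proof
    fix s assume sS: "s \<in> S"
    then have "s \<noteq> y" using yS by auto
    then consider "s < y" | "y < s" by fastforce
    then show "s \<in> V"
    proof cases
      case 1
      then have y0: "y \<noteq> 0" by auto
      have "s \<notin> {a<..y}" using a[OF y0] sS by auto
      then have "s \<le> a" using 1 by auto
      then show ?thesis unfolding V_def using c[OF y0] y0 by auto
    next
      case 2
      then have yt: "y \<noteq> top" by auto
      have "s \<notin> {y..<b}" using b[OF yt] sS by auto
      then have "b \<le> s" using 2 by auto
      then show ?thesis unfolding V_def using d[OF yt] yt by auto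
    qed
  qed
  moreover have "U \<inter> V = {}" unfolding U_def V_def by auto
  ultimately show "\<exists>U V. open U \<and> open V \<and> y \<in> U \<and> S \<subseteq> V \<and> U \<inter> V = {}" by blast
qed

lemma summ_ennr[simp]: "(f::'a\<Rightarrow>ennreal) summable_on A"
  by (simp add: nonneg_summable_on_complete)

lemma infsum_cmult_left_ennr: "(\<Sum>\<^sub>\<infinity>x\<in>A. c * f x) = c * (\<Sum>\<^sub>\<infinity>x\<in>A. (f x::ennreal))"
  by (simp add: nonneg_infsum_complete SUP_mult_left_ennreal sum_distrib_left)

lemma infsum_cmult_right_ennr: "(\<Sum>\<^sub>\<infinity>x\<in>A. f x * c) = (\<Sum>\<^sub>\<infinity>x\<in>A. (f x::ennreal)) * c"
  using infsum_cmult_left_ennr[of c f A] by (simp add: mult.commute)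

lemma infsum_swap_ennr:
  "(\<Sum>\<^sub>\<infinity>x\<in>A. \<Sum>\<^sub>\<infinity>y\<in>B. f x y) = (\<Sum>\<^sub>\<infinity>y\<in>B. \<Sum>\<^sub>\<infinity>x\<in>A. (f x y::ennreal))"
proof -
  define S where "S = (\<Sum>\<^sub>\<infinity>(x,y)\<in>A\<times>B. f x y)"
  have h: "((\<lambda>(x,y). f x y) has_sum S) (A \<times> B)" unfolding S_def
    by (rule has_sum_infsum) (rule summ_ennr)
  have 1: "((\<lambda>x. \<Sum>\<^sub>\<infinity>y\<in>B. f x y) has_sum S) A"
    by (rule has_sum_SigmaD[where f="\<lambda>(x,y). f x y" and B="\<lambda>_. B", OF h]) (auto intro: has_sum_infsum)
  have h2: "((\<lambda>(y,x). f x y) has_sum S) (B \<times> A)"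
    using h by (subst (asm) has_sum_swap) (simp add: case_prod_unfold)
  have 2: "((\<lambda>y. \<Sum>\<^sub>\<infinity>x\<in>A. f x y) has_sum S) B"
    by (rule has_sum_SigmaD[where f="\<lambda>(y,x). f x y" and B="\<lambda>_. A", OF h2]) (auto intro: has_sum_infsum)
  show ?thesis using 1 2 by (simp add: infsumI)
qed

lemma infsum_finsum_ennr:
  assumes "finite I"
  shows "(\<Sum>\<^sub>\<infinity>y\<in>A. \<Sum>i\<in>I. f i y) = (\<Sum>i\<in>I. \<Sum>\<^sub>\<infinity>y\<in>A. (f i y::ennreal))"
  using assms
proof (induction I rule: finite_induct)
  case empty then show ?case by simp
next
  case (insert x F)
  then show ?case by (simp add: infsum_add[OF summ_ennr summ_ennr])
qed

lemma infsum_single_ennr: "(\<Sum>\<^sub>\<infinity>y. if t = y then a else (0::ennreal)) = a"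
proof -
  have "(\<Sum>\<^sub>\<infinity>y. if t = y then a else (0::ennreal)) = (\<Sum>\<^sub>\<infinity>y\<in>{t}. a)"
    by (rule infsum_cong_neutral) auto
  then show ?thesis by simp
qed

lemma infsum_single_ennr': "(\<Sum>\<^sub>\<infinity>y. if y = t then a else (0::ennreal)) = a"
  using infsum_single_ennr[of t a] by (simp add: eq_commute)

lemma infsum_eq0_ennr: "(\<Sum>\<^sub>\<infinity>y\<in>A. f y) \<noteq> (0::ennreal) \<Longrightarrow> \<exists>y\<in>A. f y \<noteq> 0"
  using infsum_0 by metis

lemma le_infsum_ennr: "x \<in> A \<Longrightarrow> f x \<le> (\<Sum>\<^sub>\<infinity>y\<in>A. (f y::ennreal))"
proof -
  assume "x \<in> A"
  have "(\<Sum>\<^sub>\<infinity>y\<in>{x}. f y) \<le> (\<Sum>\<^sub>\<infinity>y\<in>A. (f y::ennreal))"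
    by (rule infsum_mono_neutral) (use \<open>x\<in>A\<close> in \<open>auto intro: summ_ennr\<close>)
  then show ?thesis by simp
qed



lemma alt_sum_even: "even (M::nat) \<Longrightarrow> (\<Sum>i<M. (-1::real)^i) = 0"
proof -
  assume "even M" then obtain k where "M = 2*k" by blast
  have "(\<Sum>i<2*k. (-1::real)^i) = 0"
  proof (induction k)
    case 0 then show ?case by simp
  next
    case (Suc k)
    have "2 * Suc k = Suc (Suc (2*k))" by simp
    then have "(\<Sum>i<2*Suc k. (-1::real)^i) = (\<Sum>i<2*k. (-1::real)^i) + (-1)^(2*k) + (-1)^(Suc (2*k))"
      by (simp only: sum.lessThan_Suc)
    then show ?case using Suc.IH by simp
  qed
  then show ?thesis using \<open>M = 2*k\<close> by simp
qed

locale ppr =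
  fixes M :: nat and lam mu :: "nat \<Rightarrow> real" and P :: policy
  assumes M2: "M \<ge> 2" and evM: "even M" and lpos: "\<forall>i<M. lam i > 0" and mpos: "\<forall>i<M. mu i > 0"
    and leq: "\<forall>i<M. lam i = mu i" and ni: "non_idling M P"

context ppr
begin

lemma prev_lt: "i < M \<Longrightarrow> prev M i < M"
  using M2 by (simp add: prev_def)

lemma prev_eq: "i < M \<Longrightarrow> prev M i = (if i = 0 then M - 1 else i - 1)"
proof -
  assume i: "i < M"
  show ?thesis
  proof (cases "i = 0")
    case True then show ?thesis using M2 by (simp add: prev_def)
  next
    case False
    then have "i + M - 1 = (i - 1) + M" using M2 by simp
    then have "prev M i = ((i - 1) + M) mod M" by (simp add: prev_def)
    also have "\<dots> = (i - 1) mod M" by simp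
    also have "\<dots> = i - 1" using i by simp
    finally show ?thesis using False by simp
  qed
qed

lemma prev_sign: "i < M \<Longrightarrow> (-1::real)^(prev M i) = - ((-1)^i)"
proof -
  assume i: "i < M"
  show ?thesis
  proof (cases "i = 0")
    case True
    then have "prev M i = M - 1" using prev_eq i by simp
    moreover have "odd (M - 1)" using evM M2 by simp
    ultimately show ?thesis using True by simp
  next
    case False
    then have "prev M i = i - 1" using prev_eq i by simp
    moreover obtain j where "i = Suc j" using False by (cases i) auto
    ultimately show ?thesis by simp
  qed
qed

lemma rate_pos: "i < M \<Longrightarrow> op_rate M lam mu P z i > 0"
  using lpos mpos prev_lt by (simp add: op_rate_def)

lemma q_pos: "pp_qtot M lam mu P z > 0"
proof -
  have "0 \<in> {..<M}" using M2 by simp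
  then have "{..<M} \<noteq> {}" by blast
  then show ?thesis unfolding pp_qtot_def using rate_pos by (intro sum_pos) auto
qed

definition "Qb = (\<Sum>i<M. lam i + mu (prev M i))"

lemma q_le: "pp_qtot M lam mu P z \<le> Qb"
  unfolding pp_qtot_def Qb_def
proof (rule sum_mono)
  fix i assume "i \<in> {..<M}"
  then have "lam i > 0" "mu (prev M i) > 0" using lpos mpos prev_lt by auto
  then show "op_rate M lam mu P z i \<le> lam i + mu (prev M i)" by (simp add: op_rate_def)
qed

definition "w i z = op_rate M lam mu P z i / pp_qtot M lam mu P z"

lemma w_pos: "i < M \<Longrightarrow> w i z > 0"
  unfolding w_def using rate_pos q_pos by simp

lemma w_sum: "(\<Sum>i<M. w i z) = 1"
proof -
  have "pp_qtot M lam mu P z \<noteq> 0" using q_pos[of z] by simp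
  then show ?thesis unfolding w_def by (simp add: sum_divide_distrib[symmetric] pp_qtot_def)
qed

lemma K_eq: "pp_kernel M lam mu P z y = (\<Sum>i<M. if op_target M P z i = y then ennreal (w i z) else 0)"
proof -
  have "(\<Sum>i<M. if op_target M P z i = y then op_rate M lam mu P z i else 0) / pp_qtot M lam mu P z
     = (\<Sum>i<M. if op_target M P z i = y then w i z else 0)"
    by (auto simp: sum_divide_distrib w_def intro!: sum.cong)
  moreover have "ennreal (\<Sum>i<M. if op_target M P z i = y then w i z else 0)
     = (\<Sum>i<M. ennreal (if op_target M P z i = y then w i z else 0))"
    by (intro sum_ennreal[symmetric]) (auto simp: less_imp_le[OF w_pos])
  ultimately show ?thesis unfolding pp_kernel_def by (simp add: if_distrib cong: if_cong)
qed

lemma K_sum: "(\<Sum>\<^sub>\<infinity>y. pp_kernel M lam mu P z y * \<phi> y) = (\<Sum>i<M. ennreal (w i z) * \<phi> (op_target M P z i))"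
proof -
  have "(\<Sum>\<^sub>\<infinity>y. pp_kernel M lam mu P z y * \<phi> y)
      = (\<Sum>\<^sub>\<infinity>y. \<Sum>i<M. if op_target M P z i = y then ennreal (w i z) * \<phi> (op_target M P z i) else 0)"
  proof (intro infsum_cong)
    fix y
    have "pp_kernel M lam mu P z y * \<phi> y = (\<Sum>i<M. (if op_target M P z i = y then ennreal (w i z) else 0) * \<phi> y)"
      unfolding K_eq by (rule sum_distrib_right)
    also have "\<dots> = (\<Sum>i<M. if op_target M P z i = y then ennreal (w i z) * \<phi> (op_target M P z i) else 0)"
      by (rule sum.cong) auto
    finally show "pp_kernel M lam mu P z y * \<phi> y = (\<Sum>i<M. if op_target M P z i = y then ennreal (w i z) * \<phi> (op_target M P z i) else 0)" .
  qed
  also have "\<dots> = (\<Sum>i<M. \<Sum>\<^sub>\<infinity>y. if op_target M P z i = y then ennreal (w i z) * \<phi> (op_target M P z i) else 0)"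
    by (rule infsum_finsum_ennr) simp
  also have "\<dots> = (\<Sum>i<M. ennreal (w i z) * \<phi> (op_target M P z i))"
    by (simp add: infsum_single_ennr)
  finally show ?thesis .
qed

lemma K_supp: "pp_kernel M lam mu P z y \<noteq> 0 \<Longrightarrow> \<exists>i<M. op_target M P z i = y"
proof (rule ccontr)
  assume a: "pp_kernel M lam mu P z y \<noteq> 0" and b: "\<not> (\<exists>i<M. op_target M P z i = y)"
  have "(\<Sum>i<M. if op_target M P z i = y then ennreal (w i z) else 0) = 0"
    using b by (intro sum.neutral) auto
  then show False using a K_eq by simp
qed

lemma target_in: "z \<in> pp_states M \<Longrightarrow> i < M \<Longrightarrow> op_target M P z i \<in> pp_states M"
  using prev_lt by (auto simp: pp_states_def op_target_def)

lemma tb_supp: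
  assumes "s \<in> pp_states M"
  shows "taboo (pp_kernel M lam mu P) {s} s n z \<noteq> 0 \<Longrightarrow> z \<in> pp_states M"
proof (induction n arbitrary: z)
  case 0 then show ?case using assms by (simp split: if_splits)
next
  case (Suc n)
  then have "(\<Sum>\<^sub>\<infinity>x. taboo (pp_kernel M lam mu P) {s} s n x * pp_kernel M lam mu P x z) \<noteq> 0"
    by (simp split: if_splits)
  then obtain x where "taboo (pp_kernel M lam mu P) {s} s n x * pp_kernel M lam mu P x z \<noteq> 0"
    using infsum_eq0_ennr by blast
  then have "x \<in> pp_states M" "pp_kernel M lam mu P x z \<noteq> 0" using Suc.IH by auto
  then obtain i where "i < M" "op_target M P x i = z" using K_supp by blast
  then show ?case using target_in \<open>x \<in> pp_states M\<close> by metis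
qed


end

context ppr begin
definition "ff z = (\<Sum>j<M. (-1::real)^j * real (z j) / lam j)"

lemma ff_upd:
  assumes k: "k < M"
  shows "ff (z(k := v)) = ff z + (-1)^k * (real v - real (z k)) / lam k"
proof -
  have "ff (z(k := v)) = (\<Sum>j<M. (-1::real)^j * real (z j) / lam j
          + (if j = k then (-1)^k * (real v - real (z k)) / lam k else 0))"
    unfolding ff_def by (rule sum.cong) (auto simp: diff_divide_distrib right_diff_distrib)
  also have "\<dots> = ff z + (-1)^k * (real v - real (z k)) / lam k"
    unfolding ff_def using k by (simp add: sum.distrib)
  finally show ?thesis .
qed

lemma lam_prev_pos: "i < M \<Longrightarrow> lam (prev M i) > 0"
  using lpos prev_lt by auto

lemma drift:
  assumes z: "z \<in> pp_states M" and i: "i < M"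
  shows "op_rate M lam mu P z i * (ff (op_target M P z i) - ff z) = (-1)^i"
proof (cases "P z i")
  case True
  define p where "p = prev M i"
  have p: "p < M" using prev_lt i p_def by simp
  have zp: "z p > 0" using ni z i True unfolding non_idling_def p_def by blast
  have lp: "lam p > 0" using lpos p by simp
  have "ff (op_target M P z i) - ff z = (-1)^p * (real (z p - 1) - real (z p)) / lam p"
    using True ff_upd[OF p] by (simp add: op_target_def p_def)
  also have "\<dots> = - ((-1)^p / lam p)" using zp by (simp add: of_nat_diff)
  finally have d: "ff (op_target M P z i) - ff z = - ((-1)^p / lam p)" .
  have r: "op_rate M lam mu P z i = lam p" using True leq p by (simp add: op_rate_def p_def)
  have e: "lam p * (- ((-1::real)^p / lam p)) = (-1)^i"
    using lp prev_sign[OF i] unfolding p_def[symmetric] by simp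
  show ?thesis by (simp only: d r e)
next
  case False
  have li: "lam i > 0" using lpos i by simp
  have d: "ff (op_target M P z i) - ff z = (-1)^i / lam i"
    using False ff_upd[OF i] by (simp add: op_target_def)
  have r: "op_rate M lam mu P z i = lam i" using False by (simp add: op_rate_def)
  have e: "lam i * ((-1::real)^i / lam i) = (-1)^i" using li by simp
  show ?thesis by (simp only: d r e)
qed

lemma step_abs:
  assumes z: "z \<in> pp_states M" and i: "i < M"
  shows "\<exists>p<M. \<bar>ff (op_target M P z i) - ff z\<bar> = 1 / lam p"
proof (cases "P z i")
  case True
  define p where "p = prev M i"
  have p: "p < M" using prev_lt i p_def by simp
  have zp: "z p > 0" using ni z i True unfolding non_idling_def p_def by blast
  have lp: "lam p > 0" using lpos p by simp
  have "ff (op_target M P z i) - ff z = (-1)^p * (real (z p - 1) - real (z p)) / lam p"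
    using True ff_upd[OF p] by (simp add: op_target_def p_def)
  also have "\<dots> = - ((-1)^p / lam p)" using zp by (simp add: of_nat_diff)
  finally have "\<bar>ff (op_target M P z i) - ff z\<bar> = 1 / lam p" using lp by simp
  then show ?thesis using p by blast
next
  case False
  have li: "lam i > 0" using lpos i by simp
  have "ff (op_target M P z i) - ff z = (-1)^i / lam i"
    using False ff_upd[OF i] by (simp add: op_target_def)
  then have "\<bar>ff (op_target M P z i) - ff z\<bar> = 1 / lam i" using li by simp
  then show ?thesis using i by blast
qed

definition "cc = (\<Sum>j<M. 1 / lam j)"
definition "dd = 1 / (\<Sum>j<M. lam j)"

lemma inv_le_cc: "p < M \<Longrightarrow> 1 / lam p \<le> cc"
  unfolding cc_def using lpos by (intro member_le_sum) auto

lemma dd_le_inv: "p < M \<Longrightarrow> dd \<le> 1 / lam p"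
proof -
  assume p: "p < M"
  have "lam p \<le> (\<Sum>j<M. lam j)" using lpos p by (intro member_le_sum) auto
  then show ?thesis unfolding dd_def using lpos p by (intro divide_left_mono) auto
qed

lemma dd_pos: "dd > 0"
proof -
  have "0 \<in> {..<M}" using M2 by simp
  then have "{..<M} \<noteq> {}" by blast
  then have "(\<Sum>j<M. lam j) > 0" using lpos by (intro sum_pos) auto
  then show ?thesis unfolding dd_def by simp
qed

lemma dd_le_cc: "dd \<le> cc"
  using dd_le_inv[of 0] inv_le_cc[of 0] M2 by simp

lemma cc_pos: "cc > 0" using dd_pos dd_le_cc by simp

lemma step_le: "z \<in> pp_states M \<Longrightarrow> i < M \<Longrightarrow> \<bar>ff (op_target M P z i) - ff z\<bar> \<le> cc"
proof -
  assume "z \<in> pp_states M" "i < M"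
  then obtain p where "p < M" "\<bar>ff (op_target M P z i) - ff z\<bar> = 1 / lam p" using step_abs by blast
  then show ?thesis using inv_le_cc by simp
qed

lemma step_ge: "z \<in> pp_states M \<Longrightarrow> i < M \<Longrightarrow> dd \<le> \<bar>ff (op_target M P z i) - ff z\<bar>"
proof -
  assume "z \<in> pp_states M" "i < M"
  then obtain p where "p < M" "\<bar>ff (op_target M P z i) - ff z\<bar> = 1 / lam p" using step_abs by blast
  then show ?thesis using dd_le_inv by simp
qed

lemma mart:
  assumes z: "z \<in> pp_states M"
  shows "(\<Sum>i<M. w i z * ff (op_target M P z i)) = ff z"
proof -
  have q0: "pp_qtot M lam mu P z \<noteq> 0" using q_pos[of z] by simp
  have "(\<Sum>i<M. w i z * (ff (op_target M P z i) - ff z))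
      = (\<Sum>i<M. (-1::real)^i / pp_qtot M lam mu P z)"
    by (rule sum.cong) (auto simp: w_def drift[OF z])
  also have "\<dots> = 0" by (simp add: sum_divide_distrib[symmetric] alt_sum_even[OF evM])
  finally have "(\<Sum>i<M. w i z * (ff (op_target M P z i) - ff z)) = 0" .
  then have "(\<Sum>i<M. w i z * ff (op_target M P z i)) - (\<Sum>i<M. w i z) * ff z = 0"
    by (simp add: right_diff_distrib sum_subtractf sum_distrib_right)
  then show ?thesis using w_sum by simp
qed

end


lemma infsum_shift_le_ennr: "(\<Sum>\<^sub>\<infinity>n. f (Suc n)) \<le> (\<Sum>\<^sub>\<infinity>n. (f n::ennreal))"
proof -
  have "(\<Sum>\<^sub>\<infinity>n. f (Suc n)) = (\<Sum>\<^sub>\<infinity>n\<in>range Suc. f n)"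
    by (subst infsum_reindex) (auto simp: comp_def)
  also have "\<dots> \<le> (\<Sum>\<^sub>\<infinity>n. f n)"
    by (rule infsum_mono_neutral) auto
  finally show ?thesis .
qed

context ppr
begin

lemma pi_K_le:
  fixes h :: "(nat \<Rightarrow> nat) \<Rightarrow> ennreal"
  assumes hs: "h s = 0"
  shows "(\<Sum>\<^sub>\<infinity>z. (\<Sum>\<^sub>\<infinity>n. taboo (pp_kernel M lam mu P) {s} s n z) * (\<Sum>\<^sub>\<infinity>y. pp_kernel M lam mu P z y * h y))
         \<le> (\<Sum>\<^sub>\<infinity>y. (\<Sum>\<^sub>\<infinity>n. taboo (pp_kernel M lam mu P) {s} s n y) * h y)"
proof -
  let ?K = "pp_kernel M lam mu P"
  let ?t = "taboo ?K {s} s"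
  have inner: "(\<Sum>\<^sub>\<infinity>z. ?t n z * (?K z y * h y)) = ?t (Suc n) y * h y" for n y
  proof (cases "y = s")
    case True then show ?thesis using hs by simp
  next
    case False
    have "(\<Sum>\<^sub>\<infinity>z. ?t n z * (?K z y * h y)) = (\<Sum>\<^sub>\<infinity>z. ?t n z * ?K z y) * h y"
      by (simp add: mult.assoc infsum_cmult_right_ennr[symmetric])
    then show ?thesis using False by simp
  qed
  have "(\<Sum>\<^sub>\<infinity>z. (\<Sum>\<^sub>\<infinity>n. ?t n z) * (\<Sum>\<^sub>\<infinity>y. ?K z y * h y))
      = (\<Sum>\<^sub>\<infinity>z. \<Sum>\<^sub>\<infinity>n. \<Sum>\<^sub>\<infinity>y. ?t n z * (?K z y * h y))"
  proof (rule infsum_cong)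
    fix z
    have "(\<Sum>\<^sub>\<infinity>n. ?t n z) * (\<Sum>\<^sub>\<infinity>y. ?K z y * h y) = (\<Sum>\<^sub>\<infinity>n. ?t n z * (\<Sum>\<^sub>\<infinity>y. ?K z y * h y))"
      by (rule infsum_cmult_right_ennr[symmetric])
    also have "\<dots> = (\<Sum>\<^sub>\<infinity>n. \<Sum>\<^sub>\<infinity>y. ?t n z * (?K z y * h y))"
      by (intro infsum_cong infsum_cmult_left_ennr[symmetric])
    finally show "(\<Sum>\<^sub>\<infinity>n. ?t n z) * (\<Sum>\<^sub>\<infinity>y. ?K z y * h y) = (\<Sum>\<^sub>\<infinity>n. \<Sum>\<^sub>\<infinity>y. ?t n z * (?K z y * h y))" .
  qed
  also have "\<dots> = (\<Sum>\<^sub>\<infinity>n. \<Sum>\<^sub>\<infinity>z. \<Sum>\<^sub>\<infinity>y. ?t n z * (?K z y * h y))"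
    by (rule infsum_swap_ennr)
  also have "\<dots> = (\<Sum>\<^sub>\<infinity>n. \<Sum>\<^sub>\<infinity>y. \<Sum>\<^sub>\<infinity>z. ?t n z * (?K z y * h y))"
    by (intro infsum_cong infsum_swap_ennr)
  also have "\<dots> = (\<Sum>\<^sub>\<infinity>n. \<Sum>\<^sub>\<infinity>y. ?t (Suc n) y * h y)"
    by (simp add: inner)
  also have "\<dots> \<le> (\<Sum>\<^sub>\<infinity>n. \<Sum>\<^sub>\<infinity>y. ?t n y * h y)"
    by (rule infsum_shift_le_ennr)
  also have "\<dots> = (\<Sum>\<^sub>\<infinity>y. \<Sum>\<^sub>\<infinity>n. ?t n y * h y)"
    by (rule infsum_swap_ennr)
  also have "\<dots> = (\<Sum>\<^sub>\<infinity>y. (\<Sum>\<^sub>\<infinity>n. ?t n y) * h y)"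
    by (simp add: infsum_cmult_right_ennr)
  finally show ?thesis .
qed

definition "hL s L z = min \<bar>ff z - ff s\<bar> L"

lemma pointwise_real:
  assumes z: "z \<in> pp_states M" and L: "cc \<le> L"
  shows "(\<Sum>i<M. w i z * hL s L (op_target M P z i)) + cc * (if \<bar>ff z - ff s\<bar> + cc > L then 1 else 0)
         \<ge> hL s L z + dd * (if z = s then 1 else 0)"
proof -
  let ?t = "op_target M P z"
  let ?g = "\<lambda>x. ff x - ff s"
  have wn: "i < M \<Longrightarrow> w i z \<ge> 0" for i using w_pos[of i z] by simp
  have st: "i < M \<Longrightarrow> \<bar>?g (?t i) - ?g z\<bar> \<le> cc" for i using step_le[OF z] by simp
  have sg: "i < M \<Longrightarrow> dd \<le> \<bar>?g (?t i) - ?g z\<bar>" for i using step_ge[OF z] by simp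
  have mg: "(\<Sum>i<M. w i z * ?g (?t i)) = ?g z"
    using mart[OF z] w_sum[of z] by (simp add: right_diff_distrib sum_subtractf sum_distrib_right[symmetric])
  show ?thesis
  proof (cases "z = s")
    case True
    have "i < M \<Longrightarrow> dd \<le> hL s L (?t i)" for i
      using sg[of i] True dd_le_cc L by (simp add: hL_def)
    then have "(\<Sum>i<M. w i z * dd) \<le> (\<Sum>i<M. w i z * hL s L (?t i))"
      using wn by (intro sum_mono mult_left_mono) auto
    moreover have "(\<Sum>i<M. w i z * dd) = dd" using w_sum[of z] by (simp add: sum_distrib_right[symmetric])
    moreover have "hL s L z = 0" using True cc_pos L by (simp add: hL_def)
    moreover have "\<not> (\<bar>ff z - ff s\<bar> + cc > L)" using True L by simp
    ultimately show ?thesis using True by simp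
  next
    case False
    show ?thesis
    proof (cases "\<bar>ff z - ff s\<bar> + cc > L")
      case True
      have "i < M \<Longrightarrow> hL s L z - cc \<le> hL s L (?t i)" for i
        using st[of i] by (auto simp: hL_def)
      then have "(\<Sum>i<M. w i z * (hL s L z - cc)) \<le> (\<Sum>i<M. w i z * hL s L (?t i))"
        using wn by (intro sum_mono mult_left_mono) auto
      moreover have "(\<Sum>i<M. w i z * (hL s L z - cc)) = hL s L z - cc"
        using w_sum[of z] by (simp add: sum_distrib_right[symmetric])
      ultimately show ?thesis using True False by simp
    next
      case True2: False
      have eq: "i < M \<Longrightarrow> hL s L (?t i) = \<bar>?g (?t i)\<bar>" for i
        using st[of i] True2 by (auto simp: hL_def)
      have "\<bar>?g z\<bar> = \<bar>\<Sum>i<M. w i z * ?g (?t i)\<bar>" using mg by simp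
      also have "\<dots> \<le> (\<Sum>i<M. \<bar>w i z * ?g (?t i)\<bar>)" by (rule sum_abs)
      also have "\<dots> = (\<Sum>i<M. w i z * hL s L (?t i))"
        using wn eq by (intro sum.cong) (auto simp: abs_mult)
      finally have "\<bar>?g z\<bar> \<le> (\<Sum>i<M. w i z * hL s L (?t i))" .
      moreover have "hL s L z \<le> \<bar>?g z\<bar>" by (simp add: hL_def)
      ultimately show ?thesis using True2 False by simp
    qed
  qed
qed

end


context ppr
begin

lemma pointwise_enn:
  assumes z: "z \<in> pp_states M" and L: "cc \<le> L"
  shows "(\<Sum>\<^sub>\<infinity>y. pp_kernel M lam mu P z y * ennreal (hL s L y))
            + ennreal cc * (if \<bar>ff z - ff s\<bar> + cc > L then 1 else 0)
         \<ge> ennreal (hL s L z) + ennreal dd * (if z = s then 1 else 0)"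
proof -
  let ?t = "op_target M P z"
  have hn: "hL s L x \<ge> 0" for x using L cc_pos by (simp add: hL_def)
  have wn: "i < M \<Longrightarrow> w i z \<ge> 0" for i using w_pos[of i z] by simp
  have "(\<Sum>\<^sub>\<infinity>y. pp_kernel M lam mu P z y * ennreal (hL s L y))
      = (\<Sum>i<M. ennreal (w i z) * ennreal (hL s L (?t i)))" by (rule K_sum)
  also have "\<dots> = (\<Sum>i<M. ennreal (w i z * hL s L (?t i)))"
    using wn by (intro sum.cong) (auto simp: ennreal_mult')
  also have "\<dots> = ennreal (\<Sum>i<M. w i z * hL s L (?t i))"
    using wn hn by (intro sum_ennreal) auto
  finally have e1: "(\<Sum>\<^sub>\<infinity>y. pp_kernel M lam mu P z y * ennreal (hL s L y)) = ennreal (\<Sum>i<M. w i z * hL s L (?t i))" .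
  have sn: "(\<Sum>i<M. w i z * hL s L (?t i)) \<ge> 0" using wn hn by (intro sum_nonneg) auto
  have pr: "(\<Sum>i<M. w i z * hL s L (?t i)) + cc * (if \<bar>ff z - ff s\<bar> + cc > L then 1 else 0)
         \<ge> hL s L z + dd * (if z = s then 1 else 0)" by (rule pointwise_real[OF z L])
  have "ennreal (hL s L z) + ennreal dd * (if z = s then 1 else 0)
      = ennreal (hL s L z + dd * (if z = s then 1 else 0))"
    using hn[of z] dd_pos by (auto simp: ennreal_plus)
  also have "\<dots> \<le> ennreal ((\<Sum>i<M. w i z * hL s L (?t i)) + cc * (if \<bar>ff z - ff s\<bar> + cc > L then 1 else 0))"
    using pr by (rule ennreal_leI)
  also have "\<dots> = ennreal (\<Sum>i<M. w i z * hL s L (?t i)) + ennreal cc * (if \<bar>ff z - ff s\<bar> + cc > L then 1 else 0)"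
    using sn cc_pos by (auto simp: ennreal_plus)
  finally show ?thesis using e1 by simp
qed

end


context ppr
begin

lemma mrt_infinite:
  assumes sS: "s \<in> pp_states M"
  shows "\<not> (mean_return_time (pp_kernel M lam mu P) (pp_qtot M lam mu P) s < \<infinity>)"
proof
  assume fin: "mean_return_time (pp_kernel M lam mu P) (pp_qtot M lam mu P) s < \<infinity>"
  let ?K = "pp_kernel M lam mu P"
  let ?q = "pp_qtot M lam mu P"
  let ?t = "taboo ?K {s} s"
  define pi where "pi z = (\<Sum>\<^sub>\<infinity>n. ?t n z)" for z
  define T where "T = (\<Sum>\<^sub>\<infinity>z. pi z)"
  have supp: "pi z \<noteq> 0 \<Longrightarrow> z \<in> pp_states M" for z
  proof -
    assume "pi z \<noteq> 0"
    then obtain n where "?t n z \<noteq> 0" unfolding pi_def using infsum_eq0_ennr by blast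
    then show ?thesis using tb_supp[OF sS] by blast
  qed
  have tq: "?t n z \<le> ennreal Qb * (?t n z / ennreal (?q z))" for n z
  proof (cases "?t n z = 0")
    case True then show ?thesis by simp
  next
    case False
    have qp: "?q z > 0" by (rule q_pos)
    have "?t n z = ?t n z * (ennreal (?q z) / ennreal (?q z))"
      using qp by (simp add: divide_ennreal)
    also have "\<dots> = (?t n z / ennreal (?q z)) * ennreal (?q z)"
      by (simp add: ennreal_divide_times)
    also have "\<dots> \<le> (?t n z / ennreal (?q z)) * ennreal Qb"
      using q_le[of z] by (intro mult_left_mono ennreal_leI) auto
    finally show ?thesis by (simp add: mult.commute)
  qed
  have "T = (\<Sum>\<^sub>\<infinity>n. \<Sum>\<^sub>\<infinity>z. ?t n z)" unfolding T_def pi_def by (rule infsum_swap_ennr)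
  also have "\<dots> \<le> (\<Sum>\<^sub>\<infinity>n. \<Sum>\<^sub>\<infinity>z. ennreal Qb * (?t n z / ennreal (?q z)))"
    by (intro infsum_mono summ_ennr tq)
  also have "\<dots> = ennreal Qb * mean_return_time ?K ?q s"
    by (simp add: mean_return_time_def infsum_cmult_left_ennr)
  also have "\<dots> < \<infinity>" using fin by (simp add: ennreal_mult_less_top)
  finally have Tfin: "T < \<infinity>" .
  have pis: "1 \<le> pi s"
  proof -
    have "?t 0 s \<le> pi s" unfolding pi_def by (rule le_infsum_ennr) simp
    then show ?thesis by simp
  qed
  define e where "e = ennreal (dd / cc)"
  have epos: "0 < e" unfolding e_def using dd_pos cc_pos by simp
  have Tsup: "T = (SUP F\<in>{F. finite F \<and> F \<subseteq> UNIV}. sum pi F)"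
    unfolding T_def by (rule nonneg_infsum_complete) simp
  have "T < T + e" using Tfin epos ennreal_add_left_cancel_less[of T 0 e] by simp
  also have "T + e = (SUP F\<in>{F. finite F \<and> F \<subseteq> UNIV}. sum pi F + e)"
    unfolding Tsup by (rule ennreal_SUP_add_left[symmetric]) auto
  finally obtain F where F: "finite F" "T < sum pi F + e"
    by (auto simp: less_SUP_iff)
  define rest where "rest = (\<Sum>\<^sub>\<infinity>z\<in>-F. pi z)"
  have "T = (\<Sum>\<^sub>\<infinity>z\<in>F \<union> -F. pi z)" unfolding T_def by simp
  also have "\<dots> = (\<Sum>\<^sub>\<infinity>z\<in>F. pi z) + rest" unfolding rest_def
    by (rule infsum_Un_disjoint) auto
  also have "\<dots> = sum pi F + rest" using F by simp
  finally have Teq: "T = sum pi F + rest" .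
  have rest_e: "rest < e" using F(2) unfolding Teq by (simp add: ennreal_add_left_cancel_less)
  define L where "L = cc + (\<Sum>z\<in>F. \<bar>ff z - ff s\<bar>)"
  have Lcc: "cc \<le> L" unfolding L_def by (simp add: sum_nonneg)
  have inF: "z \<in> F \<Longrightarrow> \<not> (\<bar>ff z - ff s\<bar> + cc > L)" for z
  proof -
    assume "z \<in> F"
    then have "\<bar>ff z - ff s\<bar> \<le> (\<Sum>z\<in>F. \<bar>ff z - ff s\<bar>)"
      using F(1) by (intro member_le_sum) auto
    then show ?thesis unfolding L_def by simp
  qed
  define IB where "IB z = (if \<bar>ff z - ff s\<bar> + cc > L then 1 else 0 :: ennreal)" for z
  define Is where "Is z = (if z = s then 1 else 0 :: ennreal)" for z
  define H where "H z = ennreal (hL s L z)" for z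
  define KH where "KH z = (\<Sum>\<^sub>\<infinity>y. ?K z y * H y)" for z
  define piB where "piB = (\<Sum>\<^sub>\<infinity>z. pi z * IB z)"
  have piB_le: "piB \<le> rest" unfolding piB_def rest_def
    by (rule infsum_mono_neutral) (auto simp: IB_def inF)
  have key: "(\<Sum>\<^sub>\<infinity>z. pi z * (H z + ennreal dd * Is z)) \<le> (\<Sum>\<^sub>\<infinity>z. pi z * (KH z + ennreal cc * IB z))"
  proof (intro infsum_mono summ_ennr)
    fix z
    show "pi z * (H z + ennreal dd * Is z) \<le> pi z * (KH z + ennreal cc * IB z)"
    proof (cases "pi z = 0")
      case True then show ?thesis by simp
    next
      case False
      then have "z \<in> pp_states M" by (rule supp)
      from pointwise_enn[OF this Lcc] show ?thesis
        unfolding H_def KH_def IB_def Is_def by (intro mult_left_mono) auto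
    qed
  qed
  have Hs: "H s = 0" unfolding H_def hL_def using Lcc cc_pos by simp
  have piKH: "(\<Sum>\<^sub>\<infinity>z. pi z * KH z) \<le> (\<Sum>\<^sub>\<infinity>z. pi z * H z)"
    unfolding pi_def KH_def by (rule pi_K_le[where s=s and h=H, OF Hs])
  have lhs: "(\<Sum>\<^sub>\<infinity>z. pi z * (KH z + ennreal cc * IB z)) = (\<Sum>\<^sub>\<infinity>z. pi z * KH z) + ennreal cc * piB"
  proof -
    have "(\<Sum>\<^sub>\<infinity>z. pi z * (KH z + ennreal cc * IB z)) = (\<Sum>\<^sub>\<infinity>z. pi z * KH z + ennreal cc * (pi z * IB z))"
      by (intro infsum_cong) (simp add: distrib_left mult.left_commute)
    also have "\<dots> = (\<Sum>\<^sub>\<infinity>z. pi z * KH z) + (\<Sum>\<^sub>\<infinity>z. ennreal cc * (pi z * IB z))"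
      by (rule infsum_add) auto
    finally show ?thesis unfolding piB_def by (simp add: infsum_cmult_left_ennr)
  qed
  have rhs: "(\<Sum>\<^sub>\<infinity>z. pi z * (H z + ennreal dd * Is z)) = (\<Sum>\<^sub>\<infinity>z. pi z * H z) + pi s * ennreal dd"
  proof -
    have "(\<Sum>\<^sub>\<infinity>z. pi z * (H z + ennreal dd * Is z)) = (\<Sum>\<^sub>\<infinity>z. pi z * H z + (if z = s then pi s * ennreal dd else 0))"
      by (intro infsum_cong) (simp add: distrib_left Is_def)
    also have "\<dots> = (\<Sum>\<^sub>\<infinity>z. pi z * H z) + (\<Sum>\<^sub>\<infinity>z. (if z = s then pi s * ennreal dd else 0))"
      by (rule infsum_add) auto
    finally show ?thesis by (simp add: infsum_single_ennr')
  qed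
  define S where "S = (\<Sum>\<^sub>\<infinity>z. pi z * H z)"
  have "S \<le> (\<Sum>\<^sub>\<infinity>z. pi z * ennreal L)" unfolding S_def H_def hL_def
    by (intro infsum_mono summ_ennr mult_left_mono ennreal_leI) auto
  also have "\<dots> = T * ennreal L" unfolding T_def by (rule infsum_cmult_right_ennr)
  also have "\<dots> < \<infinity>" using Tfin by (simp add: ennreal_mult_less_top)
  finally have Sfin: "S \<noteq> \<infinity>" by simp
  have "S + pi s * ennreal dd = (\<Sum>\<^sub>\<infinity>z. pi z * (H z + ennreal dd * Is z))" using rhs S_def by simp
  also have "\<dots> \<le> (\<Sum>\<^sub>\<infinity>z. pi z * (KH z + ennreal cc * IB z))" by (rule key)
  also have "\<dots> = (\<Sum>\<^sub>\<infinity>z. pi z * KH z) + ennreal cc * piB" by (rule lhs)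
  also have "\<dots> \<le> S + ennreal cc * piB" unfolding S_def using piKH by (rule add_right_mono)
  finally have "S + pi s * ennreal dd \<le> S + ennreal cc * piB" .
  then have "pi s * ennreal dd \<le> ennreal cc * piB"
    using Sfin by (simp add: ennreal_add_left_cancel_le)
  moreover have "ennreal dd \<le> pi s * ennreal dd"
  proof -
    have "1 * ennreal dd \<le> pi s * ennreal dd" by (rule mult_right_mono[OF pis]) simp
    then show ?thesis by simp
  qed
  ultimately have A: "ennreal dd \<le> ennreal cc * piB" by (rule order_trans[rotated])
  have "rest < \<infinity>" using rest_e ennreal_less_top[of "dd / cc"] unfolding e_def infinity_ennreal_def by (rule order.strict_trans)
  then have "rest < top" by (simp add: infinity_ennreal_def)
  then obtain r where r: "r \<ge> 0" "rest = ennreal r" by (auto simp: less_top_ennreal)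
  have "ennreal r < ennreal (dd / cc)" using rest_e r(2) unfolding e_def by simp
  then have "r < dd / cc" using ennreal_less_iff[OF r(1)] by simp
  then have "r * cc < dd" using cc_pos by (simp add: pos_less_divide_eq)
  then have "cc * r < dd" by (simp only: mult.commute)
  have "ennreal cc * piB \<le> ennreal cc * rest" using piB_le by (rule mult_left_mono) simp
  also have "\<dots> = ennreal (cc * r)" using r cc_pos by (simp add: ennreal_mult)
  also have "\<dots> < ennreal dd" using \<open>cc * r < dd\<close> r cc_pos by (simp add: ennreal_less_iff)
  finally have "ennreal cc * piB < ennreal dd" .
  then show False using A by (meson leD)
qed

end

theorem theorem3:
  fixes M :: nat and lam mu :: "nat \<Rightarrow> real"
  assumes "M \<ge> 2" and "even M"
    and "\<forall>i<M. lam i > 0" and "\<forall>i<M. mu i > 0"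
    and "\<forall>i<M. lam i = mu i"
  shows "\<not> stabilizable M lam mu"
proof
  assume "stabilizable M lam mu"
  then obtain P where ni: "non_idling M P"
    and st: "stable_process (pp_kernel M lam mu P) (pp_qtot M lam mu P) (pp_states M)"
    unfolding stabilizable_def by blast
  interpret ppr M lam mu P using assms ni by unfold_locales auto
  from st obtain C where "pos_rec_class (pp_kernel M lam mu P) (pp_qtot M lam mu P) (pp_states M) C"
    unfolding stable_process_def by blast
  then obtain s where s: "s \<in> pp_states M"
    and pr: "positive_recurrent (pp_kernel M lam mu P) (pp_qtot M lam mu P) s"
    unfolding pos_rec_class_def by blast
  from pr have "mean_return_time (pp_kernel M lam mu P) (pp_qtot M lam mu P) s < \<infinity>"
    unfolding positive_recurrent_def by blast
  with mrt_infinite[OF s] show False by blast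
qed

end
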